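(* Let $W,V$ be subspaces of $\mathbb{C}^n$ with $\mathbb{C}^n=W\oplus V^\perp$, let $\{\mathbf{w}_i\}_{i=1}^N$ be a frame for $W$ with frame operator $\mathbf{S}=\sum_{i=1}^N\mathbf{w}_i\mathbf{w}_i^*$, and let $\{\mathbf{v}_i\}_{i=1}^N$ be an oblique dual frame of $\{\mathbf{w}_i\}_{i=1}^N$ on $V$ such that $\langle\mathbf{w}_i,\mathbf{v}_i\rangle=\langle\mathbf{w}_j,\mathbf{v}_j\rangle$ for all $i,j$. Let $d_W=\dim W$. Then $$\max_{i\ne j}|\langle\mathbf{w}_i,\mathbf{v}_j\rangle|^2\ge\frac{d_W(N-d_W)}{N^2(N-1)}.$$ Furthermore, equality holds if and only if any of the following equivalent conditions holds: (1) $|\langle\mathbf{w}_i,\mathbf{v}_j\rangle|$ is constant over all $i\ne j$, and $\mathbf{v}_j=\boldsymbol{\pi}_{VW^\perp}\mathbf{S}^\dagger\mathbf{w}_j$ for each $j$; (2) the mixed Gram matrix $\mathbf{G}=(\langle\mathbf{w}_i,\mathbf{v}_j\rangle)_{ij}$ equals $\frac{d_W}{N}\left(\mathbf{Id}_{N\times N}+\sqrt{\frac{N-d_W}{d_W(N-1)}}\,\mathbf{Q}\right)$ for some generalized signature matrix $\mathbf{Q}$; (3) the vectors $\boldsymbol{\psi}_i:=\sqrt{N/d_W}\,(\mathbf{S}^\dagger)^{1/2}\mathbf{w}_i$, $i=1,\dots,N$, form an $(N,d_W)$-equiangular tight frame for $W$, and $\mathbf{v}_j=\boldsymbol{\pi}_{VW^\perp}\mathbf{S}^\dagger\mathbf{w}_j$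 for each $j$.
   Context: The inner product on $\mathbb{C}^n$ is $\langle\mathbf{x},\mathbf{y}\rangle=\mathbf{y}^*\mathbf{x}$. $\mathbf{S}^\dagger$ is the Moore–Penrose inverse and $(\mathbf{S}^\dagger)^{1/2}$ its positive semidefinite square root. When $\mathbb{C}^n=W\oplus V^\perp$ (equivalently $\mathbb{C}^n=V\oplus W^\perp$), $\boldsymbol{\pi}_{WV^\perp}$ is the oblique projection onto $W$ along $V^\perp$ and $\boldsymbol{\pi}_{VW^\perp}$ the oblique projection onto $V$ along $W^\perp$. A finite family in $W$ is a frame for $W$ if it spans $W$. A frame $\{\mathbf{v}_i\}_{i=1}^N\subset V$ for $V$ is an oblique dual frame of $\{\mathbf{w}_i\}$ on $V$ if $\boldsymbol{\pi}_{WV^\perp}\mathbf{f}=\sum_{i=1}^N\langle\mathbf{f},\mathbf{v}_i\rangle\mathbf{w}_i$ for all $\mathbf{f}\in\mathbb{C}^n$. A generalized signature matrix is a self-adjoint $N\times N$ matrix with zero diagonal and unimodular off-diagonal entries. A family of unit-norm vectors $\{\mathbf{f}_i\}_{i=1}^N$ in a $d$-dimensional space is an $(N,d)$-equiangular tight frame if it is a tight frame for that space and $|\langle\mathbf{f}_i,\mathbf{f}_j\rangle|^2$ is the same constant for all $i\ne j$. *)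

theory Defs
  imports "HOL-Analysis.Analysis"
begin

text \<open>Vectors of C^n are complex^'n (n = CARD('n)); complex linear algebra uses the
  interpretation vec (scalar multiplication by complex numbers).\<close>

definition cinner :: "complex^'n \<Rightarrow> complex^'n \<Rightarrow> complex" where
  "cinner x y = (\<Sum>k\<in>UNIV. x $ k * cnj (y $ k))"

definition orth_compl :: "(complex^'n) set \<Rightarrow> (complex^'n) set" where
  "orth_compl V = {x. \<forall>y\<in>V. cinner x y = 0}"

definition direct_sum_whole :: "(complex^'n) set \<Rightarrow> (complex^'n) set \<Rightarrow> bool" where
  "direct_sum_whole A B \<longleftrightarrow> vec.subspace A \<and> vec.subspace B \<and> A \<inter> B = {0}
     \<and> (\<forall>f. \<exists>a\<in>A. \<exists>b\<in>B. f = a + b)"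

text \<open>Oblique projection onto A along B (meaningful when C^n = A \<oplus> B).\<close>
definition obl_proj :: "(complex^'n) set \<Rightarrow> (complex^'n) set \<Rightarrow> complex^'n \<Rightarrow> complex^'n" where
  "obl_proj A B f = (THE a. a \<in> A \<and> f - a \<in> B)"

definition adj :: "complex^'n^'m \<Rightarrow> complex^'m^'n" where
  "adj A = (\<chi> i j. cnj (A $ j $ i))"

definition mp_inverse :: "complex^'n^'m \<Rightarrow> complex^'m^'n" where
  "mp_inverse A = (THE X. A ** X ** A = A \<and> X ** A ** X = X
                        \<and> adj (A ** X) = A ** X \<and> adj (X ** A) = X ** A)"

definition psd :: "complex^'n^'n \<Rightarrow> bool" where
  "psd R \<longleftrightarrow> adj R = R \<and> (\<forall>x. Re (cinner (R *v x) x) \<ge> 0)"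

definition psd_sqrt :: "complex^'n^'n \<Rightarrow> complex^'n^'n" where
  "psd_sqrt A = (THE R. psd R \<and> R ** R = A)"

definition is_frame :: "(complex^'n) set \<Rightarrow> ('m::finite \<Rightarrow> complex^'n) \<Rightarrow> bool" where
  "is_frame W w \<longleftrightarrow> (\<forall>i. w i \<in> W) \<and> vec.span (range w) = W"

definition frame_operator :: "('m::finite \<Rightarrow> complex^'n) \<Rightarrow> complex^'n^'n" where
  "frame_operator w = (\<chi> a b. \<Sum>i\<in>UNIV. w i $ a * cnj (w i $ b))"

definition oblique_dual_frame ::
  "(complex^'n) set \<Rightarrow> (complex^'n) set \<Rightarrow> ('m::finite \<Rightarrow> complex^'n) \<Rightarrow> ('m \<Rightarrow> complex^'n) \<Rightarrow> bool" where
  "oblique_dual_frame W V w v \<longleftrightarrow> is_frame V v \<and>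
     (\<forall>f. obl_proj W (orth_compl V) f = (\<Sum>i\<in>UNIV. cinner f (v i) *s w i))"

definition gen_signature :: "complex^'m^'m \<Rightarrow> bool" where
  "gen_signature Q \<longleftrightarrow> adj Q = Q \<and> (\<forall>i. Q $ i $ i = 0) \<and> (\<forall>i j. i \<noteq> j \<longrightarrow> cmod (Q $ i $ j) = 1)"

definition tight_frame :: "(complex^'n) set \<Rightarrow> ('m::finite \<Rightarrow> complex^'n) \<Rightarrow> bool" where
  "tight_frame W f \<longleftrightarrow> is_frame W f \<and>
     (\<exists>A>0. \<forall>x\<in>W. (\<Sum>i\<in>UNIV. (cmod (cinner x (f i)))\<^sup>2) = A * (norm x)\<^sup>2)"

definition is_ETF :: "nat \<Rightarrow> nat \<Rightarrow> (complex^'n) set \<Rightarrow> ('m::finite \<Rightarrow> complex^'n) \<Rightarrow> bool" where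
  "is_ETF N d W f \<longleftrightarrow> N = CARD('m) \<and> vec.dim W = d \<and> (\<forall>i. norm (f i) = 1) \<and> tight_frame W f \<and>
     (\<exists>c. \<forall>i j. i \<noteq> j \<longrightarrow> (cmod (cinner (f i) (f j)))\<^sup>2 = c)"

end

theory Submission
  imports Defs
begin

lemma cinner_add_left: "cinner (x + y) z = cinner x z + cinner y z"
  by (simp add: cinner_def distrib_right sum.distrib)
lemma cinner_add_right: "cinner x (y + z) = cinner x y + cinner x z"
  by (simp add: cinner_def distrib_left sum.distrib)
lemma cinner_diff_left: "cinner (x - y) z = cinner x z - cinner y z"
  by (simp add: cinner_def left_diff_distrib sum_subtractf)
lemma cinner_diff_right: "cinner x (y - z) = cinner x y - cinner x z"
  by (simp add: cinner_def right_diff_distrib sum_subtractf)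
lemma cinner_scale_left: "cinner (c *s x) y = c * cinner x y"
  by (simp add: cinner_def sum_distrib_left mult.assoc)
lemma cinner_scale_right: "cinner x (c *s y) = cnj c * cinner x y"
  by (simp add: cinner_def sum_distrib_left algebra_simps)
lemma cinner_zero_left[simp]: "cinner 0 y = 0"
  by (simp add: cinner_def)
lemma cinner_zero_right[simp]: "cinner x 0 = 0"
  by (simp add: cinner_def)
lemma cinner_sum_left: "cinner (sum f A) y = (\<Sum>a\<in>A. cinner (f a) y)"
  by (induction A rule: infinite_finite_induct) (auto simp: cinner_add_left)
lemma cinner_sum_right: "cinner x (sum f A) = (\<Sum>a\<in>A. cinner x (f a))"
  by (induction A rule: infinite_finite_induct) (auto simp: cinner_add_right)
lemma cinner_commute: "cinner y x = cnj (cinner x y)"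
  by (simp add: cinner_def mult.commute)
lemma cinner_self: "cinner x x = of_real ((norm x)\<^sup>2)"
proof -
  have "(norm x)\<^sup>2 = (\<Sum>i\<in>UNIV. (cmod (x$i))\<^sup>2)"
    by (simp add: norm_vec_def L2_set_def sum_nonneg)
  then show ?thesis
    by (simp add: cinner_def complex_norm_square[symmetric] of_real_sum)
qed
lemma cinner_self_eq_0[simp]: "cinner x x = 0 \<longleftrightarrow> x = 0"
  by (simp add: cinner_self)
lemma adj_adj[simp]: "adj (adj A) = A"
  by (simp add: adj_def vec_eq_iff)
lemma cinner_mat: "cinner (A *v x) y = cinner x (adj A *v y)"
  unfolding cinner_def adj_def matrix_vector_mult_def
  apply (simp add: sum_distrib_left sum_distrib_right)
  apply (subst sum.swap)
  apply (simp add: mult_ac)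
  done
lemma adj_mult: "adj (A ** B) = adj B ** adj A"
  by (simp add: adj_def matrix_matrix_mult_def vec_eq_iff mult.commute)
lemma cinner_vec_eq: "(\<And>y. cinner x y = cinner z y) \<Longrightarrow> x = z"
  by (metis cinner_diff_left cinner_self_eq_0 right_minus_eq)

lemma scaleR_vec_eq: "(r::real) *\<^sub>R (y::complex^'n) = complex_of_real r *s y"
  by (simp add: vec_eq_iff) (simp add: scaleR_conv_of_real)

lemma mat_vec_add: "A *v (x + y) = A *v x + A *v (y::complex^'n)"
  by (simp add: matrix_vector_right_distrib)
lemma mat_vec_scale: "A *v (c *s x) = c *s (A *v (x::complex^'n))"
  by (simp add: vec_eq_iff matrix_vector_mult_def sum_distrib_left mult_ac)
lemma mat_vec_diff: "A *v (x - y) = A *v x - A *v (y::complex^'n)"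
  by (simp add: matrix_vector_mult_diff_distrib)

lemma vec_subspace_real: "vec.subspace U \<Longrightarrow> subspace (U::(complex^'n) set)"
  unfolding subspace_def vec.subspace_def by (simp add: scaleR_vec_eq)

lemma cont_quad: "continuous_on S (\<lambda>y::complex^'n. Re (cinner (A *v y) y))"
  unfolding cinner_def matrix_vector_mult_def
  by (intro continuous_intros)

lemma norm_scale_real: "norm (complex_of_real r *s (y::complex^'n)) = \<bar>r\<bar> * norm y"
  by (metis norm_scaleR scaleR_vec_eq)

lemma cinner_self_Re: "Re (cinner x x) = (norm x)\<^sup>2"
  by (simp add: cinner_self)

lemma herm_real: assumes "adj A = A" shows "cnj (cinner (A *v x) x) = cinner (A *v x) x"
  by (metis assms cinner_commute cinner_mat)

lemma quad_nonneg_zero: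
  fixes a b :: real
  assumes "\<forall>t. 0 \<le> 2 * t * a + t\<^sup>2 * b" "b \<ge> 0"
  shows "a \<le> 0"
proof (rule ccontr)
  assume "\<not> a \<le> 0"
  define t where "t = - a / (b + 1)"
  have "0 \<le> 2 * t * a + t\<^sup>2 * b" using assms by auto
  moreover have "2 * t * a + t\<^sup>2 * b = a\<^sup>2 * (b - 2 * (b+1)) / (b+1)\<^sup>2"
  proof -
    have "b + 1 \<noteq> 0" using assms(2) by linarith
    then show ?thesis unfolding t_def power2_eq_square
      by (simp add: divide_simps) (simp add: algebra_simps)
  qed
  moreover have "a\<^sup>2 * (b - 2 * (b+1)) / (b+1)\<^sup>2 < 0"
    using assms(2) \<open>\<not> a \<le> 0\<close> by (intro divide_neg_pos mult_pos_neg) auto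
  ultimately show False by linarith
qed

lemma eigenvector_exists:
  fixes A :: "complex^'n^'n"
  assumes herm: "adj A = A" and sub: "vec.subspace U" and inv: "\<forall>x\<in>U. A *v x \<in> U"
    and nz: "U \<noteq> {0}"
  shows "\<exists>x\<in>U. norm x = 1 \<and> (\<exists>\<mu>. A *v x = \<mu> *s x)"
proof -
  let ?f = "\<lambda>y::complex^'n. Re (cinner (A *v y) y)"
  define K where "K = U \<inter> sphere 0 1"
  have "closed U" using vec_subspace_real[OF sub] closed_subspace by blast
  then have cK: "compact K" unfolding K_def by (simp add: closed_Int_compact)
  obtain y where y: "y \<in> U" "y \<noteq> 0" using nz vec.subspace_0[OF sub] by blast
  have "complex_of_real (1 / norm y) *s y \<in> U" using y sub by (simp add: vec.subspace_scale)
  moreover have "norm (complex_of_real (1 / norm y) *s y) = 1" using y norm_scale_real[of "1 / norm y" y] by simp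
  ultimately have "K \<noteq> {}" unfolding K_def by auto
  then obtain x where xK: "x \<in> K" and xmax: "\<forall>y\<in>K. ?f y \<le> ?f x"
    using continuous_attains_sup[OF cK _ cont_quad] by blast
  define l where "l = ?f x"
  have xU: "x \<in> U" and nx: "norm x = 1" using xK by (auto simp: K_def)
  define B where "B = (\<lambda>y. complex_of_real l *s y - A *v y)"
  have Bq: "Re (cinner (B y) y) \<ge> 0" if "y \<in> U" for y
  proof (cases "y = 0")
    case True then show ?thesis by (simp add: B_def)
  next
    case False
    define c where "c = 1 / norm y"
    have cy: "complex_of_real c *s y \<in> K" using False that sub norm_scale_real[of c y]
      unfolding K_def by (simp add: vec.subspace_scale c_def)
    have "?f (complex_of_real c *s y) = c\<^sup>2 * ?f y"
      by (simp add: mat_vec_scale cinner_scale_left cinner_scale_right power2_eq_square)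
    then have "c\<^sup>2 * ?f y \<le> l" using xmax cy l_def by auto
    then have "?f y \<le> l * (norm y)\<^sup>2" using False
      by (simp add: c_def field_simps power2_eq_square)
    then show ?thesis
      by (simp add: B_def cinner_diff_left cinner_scale_left cinner_self_Re)
  qed
  have Blin: "B (y + complex_of_real t *s z) = B y + complex_of_real t *s B z" for y z t
    by (simp add: B_def mat_vec_add mat_vec_scale algebra_simps vec_eq_iff)
  have Bherm: "cinner (B y) z = cinner y (B z)" for y z
    by (simp add: B_def cinner_diff_left cinner_diff_right cinner_scale_left cinner_scale_right
        cinner_mat herm)
  have BU: "B y \<in> U" if "y \<in> U" for y
    using that inv sub by (simp add: B_def vec.subspace_diff vec.subspace_scale)
  define z where "z = B x"
  have zU: "z \<in> U" using BU xU z_def by auto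
  have Bx0: "Re (cinner (B x) x) = 0"
    using nx by (simp add: B_def cinner_diff_left cinner_scale_left cinner_self_Re l_def)
  have "0 \<le> 2 * t * (norm z)\<^sup>2 + t\<^sup>2 * Re (cinner (B z) z)" for t
  proof -
    have "x + complex_of_real t *s z \<in> U" using xU zU sub by (simp add: vec.subspace_add vec.subspace_scale)
    then have "0 \<le> Re (cinner (B (x + complex_of_real t *s z)) (x + complex_of_real t *s z))"
      by (rule Bq)
    also have "\<dots> = Re (cinner (B x) x) + t * Re (cinner (B x) z) + t * Re (cinner (B z) x)
       + t\<^sup>2 * Re (cinner (B z) z)"
      by (simp add: Blin cinner_add_left cinner_add_right cinner_scale_left cinner_scale_right
          power2_eq_square algebra_simps)
    also have "\<dots> = 2 * t * (norm z)\<^sup>2 + t\<^sup>2 * Re (cinner (B z) z)"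
    proof -
      have "cinner (B z) x = cinner z z" using Bherm z_def by simp
      moreover have "cinner (B x) z = cinner z z" using z_def by simp
      ultimately show ?thesis using Bx0 by (simp add: cinner_self_Re)
    qed
    finally show ?thesis .
  qed
  then have "(norm z)\<^sup>2 \<le> 0" using quad_nonneg_zero Bq[OF zU] by blast
  then have "z = 0" by simp
  then have "A *v x = complex_of_real l *s x" by (simp add: z_def B_def)
  then show ?thesis using xU nx by blast
qed

definition orthonormal :: "(complex^'n) set \<Rightarrow> bool" where
  "orthonormal B \<longleftrightarrow> (\<forall>b\<in>B. \<forall>c\<in>B. cinner b c = (if b = c then 1 else 0))"

lemma span_expand:
  assumes "finite B" "orthonormal B" "x \<in> vec.span B"
  shows "x = (\<Sum>b\<in>B. cinner x b *s b)"
proof -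
  obtain c where x: "x = (\<Sum>b\<in>B. c b *s b)" using assms(3) vec.span_finite[OF assms(1)] by auto
  have "cinner x b0 = c b0" if "b0 \<in> B" for b0
  proof -
    have "cinner x b0 = (\<Sum>b\<in>B. c b * cinner b b0)" by (simp add: x cinner_sum_left cinner_scale_left)
    also have "\<dots> = (\<Sum>b\<in>B. if b = b0 then c b else 0)"
      using assms(2) that by (intro sum.cong) (auto simp: orthonormal_def)
    also have "\<dots> = c b0" using assms(1) that by simp
    finally show ?thesis .
  qed
  then show ?thesis by (simp add: x)
qed

lemma spectral_sub:
  fixes A :: "complex^'n^'n"
  assumes herm: "adj A = A"
  shows "vec.subspace U \<Longrightarrow> \<forall>x\<in>U. A *v x \<in> U \<Longrightarrow>
    \<exists>B. finite B \<and> B \<subseteq> U \<and> orthonormal B \<and> (\<forall>b\<in>B. \<exists>\<mu>. A *v b = \<mu> *s b) \<and> U \<subseteq> vec.span B"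
proof (induction "vec.dim U" arbitrary: U rule: less_induct)
  case less
  show ?case
  proof (cases "U = {0}")
    case True
    then show ?thesis by (intro exI[of _ "{}"]) (auto simp: orthonormal_def vec.span_zero)
  next
    case False
    obtain x \<mu> where xU: "x \<in> U" and nx: "norm x = 1" and ev: "A *v x = \<mu> *s x"
      using eigenvector_exists[OF herm less.prems False] by blast
    have xx: "cinner x x = 1" using nx by (simp add: cinner_self)
    define U' where "U' = {y \<in> U. cinner y x = 0}"
    have sub': "vec.subspace U'"
      using less.prems(1) unfolding U'_def vec.subspace_def
      by (auto simp: cinner_add_left cinner_scale_left)
    have inv': "\<forall>y\<in>U'. A *v y \<in> U'"
    proof
      fix y assume "y \<in> U'"
      then have "y \<in> U" "cinner y x = 0" by (auto simp: U'_def)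
      moreover have "cinner (A *v y) x = cinner y (A *v x)" by (simp add: cinner_mat herm)
      ultimately show "A *v y \<in> U'" using less.prems(2) by (simp add: U'_def ev cinner_scale_right)
    qed
    have "x \<notin> U'" using xx by (auto simp: U'_def)
    then have "U' \<subset> U" using xU unfolding U'_def by blast
    then have "vec.dim U' < vec.dim U"
      using vec.dim_psubset by (metis less.prems(1) sub' vec.span_eq_iff)
    then obtain B' where B': "finite B'" "B' \<subseteq> U'" "orthonormal B'"
       "\<forall>b\<in>B'. \<exists>\<mu>. A *v b = \<mu> *s b" "U' \<subseteq> vec.span B'"
      using less.hyps[OF _ sub' inv'] by blast
    have xB': "x \<notin> B'" using B'(2) xx by (auto simp: U'_def)
    show ?thesis
    proof (intro exI[of _ "insert x B'"] conjI)
      show "finite (insert x B')" using B' by auto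
      show "insert x B' \<subseteq> U" using B' xU by (auto simp: U'_def)
      show "orthonormal (insert x B')"
      proof -
        have "cinner x b = 0" if "b \<in> B'" for b
          using B'(2) that cinner_commute[of x b] by (auto simp: U'_def)
        moreover have "cinner b x = 0" if "b \<in> B'" for b
          using B'(2) that by (auto simp: U'_def)
        ultimately show ?thesis using B'(3) xx xB' unfolding orthonormal_def by auto
      qed
      show "\<forall>b\<in>insert x B'. \<exists>\<mu>. A *v b = \<mu> *s b" using B'(4) ev by auto
      show "U \<subseteq> vec.span (insert x B')"
      proof
        fix y assume yU: "y \<in> U"
        have "y - cinner y x *s x \<in> U'" using yU xU less.prems(1) xx
          by (simp add: U'_def cinner_diff_left cinner_scale_left vec.subspace_diff vec.subspace_scale)
        then have "y - cinner y x *s x \<in> vec.span (insert x B')"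
          using B'(5) vec.span_mono[of B' "insert x B'"] by auto
        moreover have "cinner y x *s x \<in> vec.span (insert x B')"
          by (simp add: vec.span_base vec.span_scale)
        ultimately have "(y - cinner y x *s x) + cinner y x *s x \<in> vec.span (insert x B')"
          by (rule vec.span_add)
        then show "y \<in> vec.span (insert x B')" by simp
      qed
    qed
  qed
qed

lemma spectral:
  fixes A :: "complex^'n^'n"
  assumes herm: "adj A = A"
  shows "\<exists>B. finite B \<and> orthonormal B \<and> (\<forall>b\<in>B. \<exists>\<mu>. A *v b = \<mu> *s b)
     \<and> (\<forall>x. x = (\<Sum>b\<in>B. cinner x b *s b))"
proof -
  obtain B where B: "finite B" "orthonormal B" "\<forall>b\<in>B. \<exists>\<mu>. A *v b = \<mu> *s b" "UNIV \<subseteq> vec.span B"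
    using spectral_sub[OF herm, of UNIV] vec.subspace_UNIV by blast
  then show ?thesis using span_expand[OF B(1,2)] by blast
qed

definition Dm :: "(complex^'n) set \<Rightarrow> (complex^'n \<Rightarrow> complex) \<Rightarrow> complex^'n^'n" where
  "Dm B f = (\<chi> a c. \<Sum>b\<in>B. f b * b$a * cnj (b$c))"

definition complete :: "(complex^'n) set \<Rightarrow> bool" where
  "complete B \<longleftrightarrow> finite B \<and> orthonormal B \<and> (\<forall>x. x = (\<Sum>b\<in>B. cinner x b *s b))"

lemma mat_vec_sum: "finite B \<Longrightarrow> A *v (\<Sum>b\<in>B. c b *s b) = (\<Sum>b\<in>B. c b *s (A *v (b::complex^'n)))"
  by (induction B rule: finite_induct) (auto simp: mat_vec_add mat_vec_scale)

lemma Dm_vec: "Dm B f *v x = (\<Sum>b\<in>B. (f b * cinner x b) *s b)"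
proof -
  have "(\<Sum>c\<in>UNIV. (\<Sum>b\<in>B. f b * b$a * cnj (b$c)) * x$c) = (\<Sum>b\<in>B. f b * (\<Sum>c\<in>UNIV. x$c * cnj (b$c)) * b$a)" for a
    by (simp add: sum_distrib_left sum_distrib_right sum.swap[of _ B] mult_ac)
  then show ?thesis
    by (simp add: vec_eq_iff Dm_def matrix_vector_mult_def cinner_def sum_component)
qed

lemma Dm_eig: assumes "orthonormal B" "finite B" "b0 \<in> B" shows "Dm B f *v b0 = f b0 *s b0"
proof -
  have "Dm B f *v b0 = (\<Sum>b\<in>B. (if b = b0 then f b0 *s b0 else 0))"
    unfolding Dm_vec using assms by (intro sum.cong) (auto simp: orthonormal_def)
  then show ?thesis using assms by simp
qed

lemma Dm_ext: assumes "complete B" "\<forall>b\<in>B. M *v b = g b *s b" shows "M = Dm B g"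
proof -
  have "M *v x = Dm B g *v x" for x
  proof -
    have "M *v x = M *v (\<Sum>b\<in>B. cinner x b *s b)" using assms(1) complete_def by metis
    also have "\<dots> = (\<Sum>b\<in>B. cinner x b *s (g b *s b))"
    proof -
      have "finite B" using assms(1) complete_def by blast
      then show ?thesis using assms(2) by (simp add: mat_vec_sum)
    qed
    also have "\<dots> = Dm B g *v x" by (simp add: Dm_vec mult.commute)
    finally show ?thesis .
  qed
  then show ?thesis by (simp add: matrix_eq)
qed

lemma Dm_mult: assumes "complete B" shows "Dm B f ** Dm B g = Dm B (\<lambda>b. f b * g b)"
proof -
  have "(Dm B f ** Dm B g) *v b = (f b * g b) *s b" if "b \<in> B" for b
    using assms that by (simp add: matrix_vector_mul_assoc[symmetric] Dm_eig complete_def mat_vec_scale)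
  then show ?thesis by (intro Dm_ext[OF assms]) auto
qed

lemma Dm_one: assumes "complete B" shows "Dm B (\<lambda>b. 1) = mat 1"
  using Dm_ext[OF assms, of "mat 1" "\<lambda>b. 1"] by simp

lemma Dm_adj: "adj (Dm B f) = Dm B (\<lambda>b. cnj (f b))"
  by (simp add: adj_def Dm_def vec_eq_iff mult_ac)

lemma Dm_cinner: "cinner (Dm B f *v x) x = (\<Sum>b\<in>B. f b * complex_of_real ((cmod (cinner x b))\<^sup>2))"
proof -
  have "cinner x b * cinner b x = complex_of_real ((cmod (cinner x b))\<^sup>2)" for b
    using cinner_commute[of b x] complex_norm_square[of "cinner x b"] by simp
  then show ?thesis by (simp add: Dm_vec cinner_sum_left cinner_scale_left mult.assoc)
qed

lemma Dm_psd: assumes "\<forall>b. r b \<ge> 0" shows "psd (Dm B (\<lambda>b. complex_of_real (r b)))"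
proof -
  have "Re (cinner (Dm B (\<lambda>b. complex_of_real (r b)) *v x) x) \<ge> 0" for x
    unfolding Dm_cinner using assms by (simp add: sum_nonneg)
  then show ?thesis unfolding psd_def Dm_adj by simp
qed

lemma mp_unique:
  fixes A X Y :: "complex^'n^'n"
  assumes "A ** X ** A = A" "X ** A ** X = X" "adj (A ** X) = A ** X" "adj (X ** A) = X ** A"
    and "A ** Y ** A = A" "Y ** A ** Y = Y" "adj (A ** Y) = A ** Y" "adj (Y ** A) = Y ** A"
  shows "X = Y"
proof -
  have "X = X ** (A ** X)" using assms(2) by (simp add: matrix_mul_assoc)
  also have "\<dots> = X ** adj X ** adj A" using assms(3) by (metis adj_mult matrix_mul_assoc)
  also have "adj A = adj A ** adj Y ** adj A" using assms(5) by (metis adj_mult matrix_mul_assoc)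
  finally have "X = X ** (adj X ** adj A) ** (adj Y ** adj A)" by (simp add: matrix_mul_assoc)
  also have "\<dots> = X ** (A ** X) ** (A ** Y)" using assms(3,7) by (simp add: adj_mult)
  also have "\<dots> = X ** A ** Y" using assms(2) by (simp add: matrix_mul_assoc)
  finally have X: "X = X ** A ** Y" .
  have "Y = (Y ** A) ** Y" using assms(6) by (simp add: matrix_mul_assoc)
  also have "\<dots> = adj A ** adj Y ** Y" using assms(8) by (metis adj_mult)
  also have "adj A = adj A ** adj X ** adj A" using assms(1) by (metis adj_mult matrix_mul_assoc)
  finally have "Y = (adj A ** adj X) ** (adj A ** adj Y) ** Y" by (simp add: matrix_mul_assoc)
  also have "\<dots> = (X ** A) ** (Y ** A) ** Y" using assms(4,8) by (simp add: adj_mult)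
  also have "\<dots> = X ** A ** Y" using assms(6) by (metis matrix_mul_assoc)
  finally show ?thesis using X by simp
qed

lemma mp_inverse_eq:
  fixes A X :: "complex^'n^'n"
  assumes "A ** X ** A = A" "X ** A ** X = X" "adj (A ** X) = A ** X" "adj (X ** A) = X ** A"
  shows "mp_inverse A = X"
  unfolding mp_inverse_def
  apply (rule the_equality)
  using assms apply blast
  using mp_unique assms by blast

lemma cinner_neg_left: "cinner (- x) y = - cinner x y"
  by (simp add: cinner_def sum_negf)
lemma cinner_neg_right: "cinner x (- y) = - cinner x y"
  by (simp add: cinner_def sum_negf)

lemma Dm_sqrt_sq: assumes "complete B" "\<forall>b. m b \<ge> 0"
  shows "Dm B (\<lambda>b. complex_of_real (sqrt (m b))) ** Dm B (\<lambda>b. complex_of_real (sqrt (m b)))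
       = Dm B (\<lambda>b. complex_of_real (m b))"
proof -
  have "(\<lambda>b. complex_of_real (sqrt (m b)) * complex_of_real (sqrt (m b))) = (\<lambda>b. complex_of_real (m b))"
    using assms(2) by (auto simp: of_real_mult[symmetric] simp del: of_real_mult)
  then show ?thesis using Dm_mult[OF assms(1)] by metis
qed

lemma psd_sqrt_unique_aux:
  fixes R :: "complex^'n^'n"
  assumes R: "psd R" and RR: "R *v (R *v b) = complex_of_real m *s b" and m: "m \<ge> 0"
  shows "R *v b = complex_of_real (sqrt m) *s b"
proof (cases "m = 0")
  case True
  have hR: "adj R = R" using R psd_def by blast
  have "cinner (R *v (R *v b)) b = cinner (R *v b) (R *v b)" by (metis cinner_mat hR)
  then have "cinner (R *v b) (R *v b) = 0" using RR True by simp
  then show ?thesis using True by simp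
next
  case False
  define s where "s = sqrt m"
  have s: "s > 0" using False m by (simp add: s_def)
  have ss: "complex_of_real m = complex_of_real s * complex_of_real s"
    using m by (simp add: s_def of_real_mult[symmetric] del: of_real_mult)
  define y where "y = R *v b - complex_of_real s *s b"
  have Ry: "R *v y = - complex_of_real s *s y"
    by (simp add: y_def mat_vec_diff mat_vec_scale RR ss vec_eq_iff algebra_simps)
  have "Re (cinner (R *v y) y) \<ge> 0" using R psd_def by blast
  also have "Re (cinner (R *v y) y) = - s * (norm y)\<^sup>2"
    by (simp add: Ry cinner_neg_left cinner_scale_left cinner_self_Re)
  finally have "(norm y)\<^sup>2 \<le> 0" using s by (simp add: mult_le_0_iff)
  then have "y = 0" by simp
  then show ?thesis by (simp add: y_def s_def)
qed

lemma psd_sqrt_Dm: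
  assumes B: "complete B" and m: "\<forall>b. m b \<ge> 0"
  shows "psd_sqrt (Dm B (\<lambda>b. complex_of_real (m b))) = Dm B (\<lambda>b. complex_of_real (sqrt (m b)))"
  unfolding psd_sqrt_def
proof (rule the_equality)
  show "psd (Dm B (\<lambda>b. complex_of_real (sqrt (m b)))) \<and>
    Dm B (\<lambda>b. complex_of_real (sqrt (m b))) ** Dm B (\<lambda>b. complex_of_real (sqrt (m b))) =
    Dm B (\<lambda>b. complex_of_real (m b))"
    using Dm_psd[of "\<lambda>b. sqrt (m b)"] Dm_sqrt_sq[OF B m] m by simp
next
  fix R assume R: "psd R \<and> R ** R = Dm B (\<lambda>b. complex_of_real (m b))"
  have "R *v b = complex_of_real (sqrt (m b)) *s b" if "b \<in> B" for b
  proof (rule psd_sqrt_unique_aux)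
    show "psd R" using R by blast
    show "m b \<ge> 0" using m by blast
    show "R *v (R *v b) = complex_of_real (m b) *s b"
      using R that B by (simp add: matrix_vector_mul_assoc Dm_eig complete_def)
  qed
  then show "R = Dm B (\<lambda>b. complex_of_real (sqrt (m b)))" by (intro Dm_ext[OF B]) auto
qed

lemma S_vec: "frame_operator w *v x = (\<Sum>i\<in>UNIV. cinner x (w i) *s w i)"
proof -
  have "(\<Sum>c\<in>UNIV. (\<Sum>i\<in>UNIV. w i $ a * cnj (w i $ c)) * x$c) = (\<Sum>i\<in>UNIV. (\<Sum>c\<in>UNIV. x$c * cnj (w i$c)) * w i$a)" for a
    apply (simp add: sum_distrib_left sum_distrib_right)
    apply (subst sum.swap)
    apply (simp add: mult_ac)
    done
  then show ?thesis
    by (simp add: vec_eq_iff frame_operator_def matrix_vector_mult_def cinner_def sum_component)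
qed

lemma S_adj: "adj (frame_operator w) = frame_operator w"
  by (simp add: adj_def frame_operator_def vec_eq_iff mult.commute)

lemma S_cinner: "cinner (frame_operator w *v x) x = complex_of_real (\<Sum>i\<in>UNIV. (cmod (cinner x (w i)))\<^sup>2)"
proof -
  have "cinner x (w i) * cinner (w i) x = complex_of_real ((cmod (cinner x (w i)))\<^sup>2)" for i
    using cinner_commute[of "w i" x] complex_norm_square[of "cinner x (w i)"] by simp
  then show ?thesis by (simp add: S_vec cinner_sum_left cinner_scale_left of_real_sum)
qed

lemma orth_compl_diff: "x \<in> orth_compl U \<Longrightarrow> y \<in> orth_compl U \<Longrightarrow> x - y \<in> orth_compl U"
  by (simp add: orth_compl_def cinner_diff_left)

locale setting =
  fixes W V :: "(complex^'n) set"
    and w v :: "'m::finite \<Rightarrow> complex^'n"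
  assumes subW: "vec.subspace W" and subV: "vec.subspace V"
    and dsum: "direct_sum_whole W (orth_compl V)"
    and frame: "is_frame W w"
    and dual: "oblique_dual_frame W V w v"
begin

lemma wW: "w i \<in> W" using frame is_frame_def by blast
lemma vV: "v i \<in> V" using dual oblique_dual_frame_def is_frame_def by blast
lemma spanw: "vec.span (range w) = W" using frame is_frame_def by blast
lemma spanv: "vec.span (range v) = V" using dual oblique_dual_frame_def is_frame_def by blast

lemma pi_unique:
  assumes "a \<in> W" "f - a \<in> orth_compl V" "a' \<in> W" "f - a' \<in> orth_compl V"
  shows "a = a'"
proof -
  have "a' - a \<in> W" using assms subW vec.subspace_diff by blast
  moreover have "(f - a) - (f - a') \<in> orth_compl V" using assms orth_compl_diff by blast
  ultimately have "a' - a \<in> W \<inter> orth_compl V" by simp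
  moreover have "W \<inter> orth_compl V = {0}" using dsum direct_sum_whole_def by blast
  ultimately show ?thesis by auto
qed

lemma pi_eq: assumes "a \<in> W" "f - a \<in> orth_compl V" shows "obl_proj W (orth_compl V) f = a"
  unfolding obl_proj_def using pi_unique assms by blast

lemma pi_W: "x \<in> W \<Longrightarrow> obl_proj W (orth_compl V) x = x"
  by (rule pi_eq) (auto simp: orth_compl_def)

lemma recon: "x \<in> W \<Longrightarrow> x = (\<Sum>i\<in>UNIV. cinner x (v i) *s w i)"
  using pi_W dual oblique_dual_frame_def by metis

lemma VWperp: assumes "x \<in> V" "\<forall>y\<in>W. cinner x y = 0" shows "x = 0"
proof -
  have "cinner f x = 0" for f
  proof -
    obtain a b where ab: "a \<in> W" "b \<in> orth_compl V" "f = a + b"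
      using dsum direct_sum_whole_def by blast
    have "cinner a x = 0" using assms ab cinner_commute[of a x] by simp
    moreover have "cinner b x = 0" using ab assms by (simp add: orth_compl_def)
    ultimately show ?thesis using ab by (simp add: cinner_add_left)
  qed
  then show ?thesis using cinner_self_eq_0 by blast
qed

definition pi2 :: "complex^'n \<Rightarrow> complex^'n" where
  "pi2 y = (\<Sum>i\<in>UNIV. cinner y (w i) *s v i)"

lemma pi2_V: "pi2 y \<in> V"
  unfolding pi2_def using subV vV by (intro vec.subspace_sum) (auto simp: vec.subspace_scale)

lemma pi2_orth: assumes "x \<in> W" shows "cinner x (pi2 y) = cinner x y"
proof -
  have "cinner x (pi2 y) = (\<Sum>i\<in>UNIV. cinner x (v i) * cinner (w i) y)"
    unfolding pi2_def by (simp add: cinner_sum_right cinner_scale_right cinner_commute[of y] mult.commute)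
  also have "\<dots> = cinner (\<Sum>i\<in>UNIV. cinner x (v i) *s w i) y"
    by (simp add: cinner_sum_left cinner_scale_left)
  also have "\<dots> = cinner x y" using recon[OF assms] by simp
  finally show ?thesis .
qed

lemma pi2_eq: "obl_proj V (orth_compl W) y = pi2 y"
  unfolding obl_proj_def
proof (rule the_equality)
  have "cinner (pi2 y) x = cinner y x" if "x \<in> W" for x
    using pi2_orth[OF that, of y] by (metis cinner_commute)
  then show "pi2 y \<in> V \<and> y - pi2 y \<in> orth_compl W"
    using pi2_V by (auto simp: orth_compl_def cinner_diff_left)
next
  fix a assume a: "a \<in> V \<and> y - a \<in> orth_compl W"
  have "a - pi2 y \<in> V" using a pi2_V subV vec.subspace_diff by blast
  moreover have "\<forall>x\<in>W. cinner (a - pi2 y) x = 0"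
  proof
    fix x assume x: "x \<in> W"
    have "cinner (y - a) x = 0" using a x by (simp add: orth_compl_def)
    moreover have "cinner x (pi2 y) = cinner x y" using pi2_orth x by blast
    then have "cinner (pi2 y) x = cinner y x" by (metis cinner_commute)
    ultimately show "cinner (a - pi2 y) x = 0" by (simp add: cinner_diff_left)
  qed
  ultimately show "a = pi2 y" using VWperp by fastforce
qed

lemma pi2_cinner: "x \<in> W \<Longrightarrow> cinner x (obl_proj V (orth_compl W) y) = cinner x y"
  using pi2_eq pi2_orth by simp

lemma trace_dim: "(\<Sum>i\<in>UNIV. cinner (w i) (v i)) = of_nat (vec.dim W)"
proof -
  obtain Bs where Bs: "Bs \<subseteq> W" "vec.independent Bs" "W \<subseteq> vec.span Bs" "card Bs = vec.dim W"
    using vec.basis_exists by blast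
  have fin: "finite Bs" using Bs(2) vec.finiteI_independent by blast
  have "\<forall>i. \<exists>r. w i = (\<Sum>c\<in>Bs. r c *s c)"
    using wW Bs(3) vec.span_finite[OF fin] by blast
  then obtain r where r: "\<And>i. w i = (\<Sum>c\<in>Bs. r i c *s c)" by metis
  have one: "(\<Sum>i\<in>UNIV. cinner b (v i) * r i b) = 1" if b: "b \<in> Bs" for b
  proof -
    define k where "k c = (\<Sum>i\<in>UNIV. cinner b (v i) * r i c) - (if c = b then 1 else 0)" for c
    have "b = (\<Sum>i\<in>UNIV. cinner b (v i) *s w i)" using recon b Bs(1) by blast
    also have "\<dots> = (\<Sum>i\<in>UNIV. \<Sum>c\<in>Bs. (cinner b (v i) * r i c) *s c)"
      by (simp add: r vec.scale_sum_right)
    also have "\<dots> = (\<Sum>c\<in>Bs. (\<Sum>i\<in>UNIV. cinner b (v i) * r i c) *s c)"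
      by (subst sum.swap) (simp add: vec.scale_sum_left)
    finally have e1: "b = (\<Sum>c\<in>Bs. (\<Sum>i\<in>UNIV. cinner b (v i) * r i c) *s c)" .
    have "(\<Sum>c\<in>Bs. (if c = b then 1 else 0) *s c) = (\<Sum>c\<in>Bs. if c = b then c else 0)"
      by (rule sum.cong) auto
    then have e2: "b = (\<Sum>c\<in>Bs. (if c = b then 1 else 0) *s c)" using fin b by simp
    have "(\<Sum>c\<in>Bs. k c *s c) = 0"
      unfolding k_def by (simp add: vec.scale_left_diff_distrib sum_subtractf e1[symmetric] e2[symmetric])
    then have "k b = 0" using Bs(2) b vec.independent_explicit by blast
    then show ?thesis by (simp add: k_def)
  qed
  have "(\<Sum>i\<in>UNIV. cinner (w i) (v i)) = (\<Sum>i\<in>UNIV. \<Sum>c\<in>Bs. r i c * cinner c (v i))"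
    by (subst r) (simp add: cinner_sum_left cinner_scale_left)
  also have "\<dots> = (\<Sum>c\<in>Bs. \<Sum>i\<in>UNIV. cinner c (v i) * r i c)"
    by (subst sum.swap) (simp add: mult.commute)
  also have "\<dots> = (\<Sum>c\<in>Bs. 1)" using one by simp
  finally show ?thesis using Bs(4) by simp
qed

lemma dim_le: "vec.dim W \<le> CARD('m)"
proof -
  have "vec.dim W \<le> card (range w)" using vec.dim_le_card[of W "range w"] spanw by auto
  also have "\<dots> \<le> CARD('m)" by (rule card_image_le) simp
  finally show ?thesis .
qed

end

lemma Dm_cong: "(\<And>b. b \<in> B \<Longrightarrow> f b = g b) \<Longrightarrow> Dm B f = Dm B g"
  unfolding Dm_def by (simp add: vec_eq_iff)

lemma spec_S:
  fixes w :: "'m::finite \<Rightarrow> complex^'n"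
  shows "\<exists>B lam. complete B \<and> (\<forall>b. lam b \<ge> 0) \<and> frame_operator w = Dm B (\<lambda>b. complex_of_real (lam b))"
proof -
  obtain B where B: "finite B" "orthonormal B" "\<forall>b\<in>B. \<exists>\<mu>. frame_operator w *v b = \<mu> *s b"
     "\<forall>x. x = (\<Sum>b\<in>B. cinner x b *s b)"
    using spectral[OF S_adj] by blast
  have cB: "complete B" using B complete_def by blast
  define lam where "lam b = (\<Sum>i\<in>UNIV. (cmod (cinner b (w i)))\<^sup>2)" for b
  have lam0: "\<forall>b. lam b \<ge> 0" by (simp add: lam_def sum_nonneg)
  have "frame_operator w *v b = complex_of_real (lam b) *s b" if b: "b \<in> B" for b
  proof -
    obtain \<mu> where mu: "frame_operator w *v b = \<mu> *s b" using B(3) b by blast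
    have "cinner b b = 1" using B(2) b orthonormal_def by metis
    then have "\<mu> = cinner (frame_operator w *v b) b" by (simp add: mu cinner_scale_left)
    also have "\<dots> = complex_of_real (lam b)" by (simp add: S_cinner lam_def)
    finally show ?thesis using mu by simp
  qed
  then have "frame_operator w = Dm B (\<lambda>b. complex_of_real (lam b))" by (intro Dm_ext[OF cB]) auto
  then show ?thesis using cB lam0 by blast
qed

lemma spec_facts:
  fixes w :: "'m::finite \<Rightarrow> complex^'n"
  defines "S \<equiv> frame_operator w"
  defines "X \<equiv> mp_inverse S"
  defines "R \<equiv> psd_sqrt X"
  shows "adj X = X \<and> S ** X ** S = S \<and> S ** X = X ** S \<and> adj S = S \<and> R ** R = X \<and> adj R = R
     \<and> R ** S ** R = S ** X \<and> R ** (S ** X) = S ** (X ** R)"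
proof -
  obtain B lam where B: "complete B" and lam: "\<forall>b. lam b \<ge> 0"
    and SD: "S = Dm B (\<lambda>b. complex_of_real (lam b))"
    using spec_S[of w] S_def by blast
  define lp where "lp b = (if lam b = 0 then 0 else 1 / lam b)" for b
  have lp: "\<forall>b. lp b \<ge> 0" using lam by (simp add: lp_def)
  let ?D = "\<lambda>f. Dm B (\<lambda>b. complex_of_real (f b))"
  have mul: "?D f ** ?D g = ?D (\<lambda>b. f b * g b)" for f g
    using Dm_mult[OF B] by simp
  have adjD: "adj (?D f) = ?D f" for f by (simp add: Dm_adj)
  have XD: "X = ?D lp"
    unfolding X_def
  proof (rule mp_inverse_eq)
    have e1: "lam b * lp b * lam b = lam b" for b by (auto simp: lp_def)
    have e2: "lp b * lam b * lp b = lp b" for b by (auto simp: lp_def)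
    show "S ** ?D lp ** S = S" unfolding SD mul e1 ..
    show "?D lp ** S ** ?D lp = ?D lp" unfolding SD mul e2 ..
    show "adj (S ** ?D lp) = S ** ?D lp" unfolding SD mul adjD ..
    show "adj (?D lp ** S) = ?D lp ** S" unfolding SD mul adjD ..
  qed
  have RD: "R = ?D (\<lambda>b. sqrt (lp b))" unfolding R_def XD by (rule psd_sqrt_Dm[OF B lp])
  have sq: "sqrt (lp b) * sqrt (lp b) = lp b" for b using lp by auto
  have c1: "sqrt (lp b) * lam b * sqrt (lp b) = lam b * lp b" for b
    using lp by (metis mult.commute mult.left_commute sq)
  have e1: "lam b * lp b * lam b = lam b" for b by (auto simp: lp_def)
  have "S ** X ** S = S" unfolding XD SD mul e1 ..
  moreover have "S ** X = X ** S" unfolding XD SD mul by (simp add: mult.commute)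
  moreover have "R ** R = X" unfolding RD XD mul sq ..
  moreover have "R ** S ** R = S ** X" unfolding RD XD SD mul c1 ..
  moreover have "R ** (S ** X) = S ** (X ** R)" unfolding RD XD SD mul by (simp add: mult_ac)
  ultimately show ?thesis
    unfolding RD XD SD adjD by simp
qed

definition fro :: "complex^'m^'m \<Rightarrow> real" where
  "fro M = (\<Sum>i\<in>UNIV. \<Sum>j\<in>UNIV. (cmod (M$i$j))\<^sup>2)"

lemma fro_trace: "complex_of_real (fro M) = trace (M ** adj M)"
proof -
  have "M$i$j * cnj (M$i$j) = complex_of_real ((cmod (M$i$j))\<^sup>2)" for i j
    using complex_norm_square[of "M$i$j"] by simp
  then show ?thesis by (simp add: fro_def trace_def matrix_matrix_mult_def adj_def of_real_sum)
qed

lemma fro_zero: "fro M = 0 \<Longrightarrow> M = 0"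
proof -
  assume "fro M = 0"
  then have "\<forall>i\<in>UNIV. (\<Sum>j\<in>UNIV. (cmod (M$i$j))\<^sup>2) = 0"
    unfolding fro_def by (subst sum_nonneg_eq_0_iff[symmetric]) (auto intro: sum_nonneg)
  then have "\<forall>i j. (cmod (M$i$j))\<^sup>2 = 0" by (simp add: sum_nonneg_eq_0_iff)
  then show "M = 0" by (simp add: vec_eq_iff)
qed

lemma mm_diff_l: "(A::complex^'m^'m) ** (B - C) = A ** B - A ** C"
  by (simp add: matrix_matrix_mult_def vec_eq_iff right_diff_distrib sum_subtractf)
lemma mm_diff_r: "((A::complex^'m^'m) - B) ** C = A ** C - B ** C"
  by (simp add: matrix_matrix_mult_def vec_eq_iff left_diff_distrib sum_subtractf)

lemma adj_diff: "adj (A - B) = adj A - adj B"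
  by (simp add: adj_def vec_eq_iff)

lemma trace_adj: "trace (adj A) = cnj (trace A)"
  by (simp add: trace_def adj_def)

lemma fro_diff_eq:
  fixes G H :: "complex^'m^'m"
  assumes GH: "G ** H = H" and HG: "H ** G = G" and aH: "adj H = H"
  shows "fro (G - H) = fro G - Re (trace G)" and "Im (trace G) = 0"
proof -
  have tH: "trace H = trace G" using trace_mul_sym[of G H] GH HG by simp
  have HH: "H ** H = H"
  proof -
    have "H ** H = H ** (G ** H)" using GH by simp
    also have "\<dots> = (H ** G) ** H" by (rule matrix_mul_assoc)
    finally show ?thesis using HG GH by simp
  qed
  have "complex_of_real (fro (G - H)) = trace ((G - H) ** (adj G - H))"
    by (simp add: fro_trace adj_diff aH)
  also have "\<dots> = trace (G ** adj G) - trace (G ** H) - trace (H ** adj G) + trace (H ** H)"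
    by (simp add: mm_diff_l mm_diff_r trace_sub)
  also have "H ** adj G = adj (G ** H)" by (simp add: adj_mult aH)
  finally have e: "complex_of_real (fro (G - H)) = complex_of_real (fro G) - cnj (trace G)"
    using GH HH tH by (simp add: trace_adj fro_trace)
  then have c: "cnj (trace G) = complex_of_real (fro G - fro (G - H))"
    by (simp add: eq_diff_eq diff_eq_eq add.commute)
  have "Im (cnj (trace G)) = 0" "Re (cnj (trace G)) = fro G - fro (G - H)"
    unfolding c by simp_all
  then show "Im (trace G) = 0" "fro (G - H) = fro G - Re (trace G)" by simp_all
qed

context setting begin

definition "SS = frame_operator w"
definition "XX = mp_inverse SS"
definition "RR = psd_sqrt XX"
definition Gm :: "complex^'m^'m" where "Gm = (\<chi> i j. cinner (w i) (v j))"
definition Hm :: "complex^'m^'m" where "Hm = (\<chi> i j. cinner (w i) (XX *v w j))"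

lemma facts: "adj XX = XX \<and> SS ** XX ** SS = SS \<and> SS ** XX = XX ** SS \<and> adj SS = SS \<and> RR ** RR = XX \<and> adj RR = RR
     \<and> RR ** SS ** RR = SS ** XX \<and> RR ** (SS ** XX) = SS ** (XX ** RR)"
  unfolding RR_def XX_def SS_def by (rule spec_facts)

lemma SXw: "(SS ** XX) *v w i = w i"
proof -
  define z where "z = w i - (SS ** XX) *v w i"
  have f: "SS ** XX = XX ** SS" "SS ** XX ** SS = SS" using facts by auto
  have "SS ** (SS ** XX) = SS ** XX ** SS" by (simp add: f(1) matrix_mul_assoc)
  then have "SS ** (SS ** XX) = SS" using f(2) by simp
  then have Sz: "SS *v z = 0" by (simp add: z_def mat_vec_diff matrix_vector_mul_assoc)
  have e: "cinner (SS *v z) z = complex_of_real (\<Sum>j\<in>UNIV. (cmod (cinner z (w j)))\<^sup>2)"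
    unfolding SS_def by (rule S_cinner)
  then have "(\<Sum>j\<in>UNIV. (cmod (cinner z (w j)))\<^sup>2) = 0"
    using Sz by (metis cinner_zero_left of_real_eq_0_iff)
  then have "\<forall>j\<in>UNIV. (cmod (cinner z (w j)))\<^sup>2 = 0"
    by (subst sum_nonneg_eq_0_iff[symmetric]) auto
  then have zw: "cinner z (w j) = 0" for j by simp
  have aSX: "adj (SS ** XX) = XX ** SS" using facts by (simp add: adj_mult)
  have "cinner z ((SS ** XX) *v w i) = cinner ((XX ** SS) *v z) (w i)"
    using cinner_mat[of "XX ** SS" z "w i"] aSX by (metis adj_adj)
  also have "\<dots> = 0" by (simp add: matrix_vector_mul_assoc[symmetric] Sz)
  finally have "cinner z z = 0" using zw by (simp add: z_def[of] cinner_diff_right)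
  then show ?thesis by (simp add: z_def)
qed

lemma SX_W: assumes "x \<in> W" shows "(SS ** XX) *v x = x"
proof -
  have "x \<in> vec.span (range w)" using assms spanw by simp
  then show ?thesis
  proof (induction rule: vec.span_induct)
    case base
    show ?case unfolding vec.subspace_def by (auto simp: mat_vec_add mat_vec_scale)
  next
    case (step x) then show ?case using SXw by auto
  qed
qed

lemma GH: "Gm ** Hm = Hm"
proof -
  have "(\<Sum>j\<in>UNIV. cinner (w i) (v j) * cinner (w j) (XX *v w k)) = cinner (w i) (XX *v w k)" for i k
  proof -
    have "(\<Sum>j\<in>UNIV. cinner (w i) (v j) * cinner (w j) (XX *v w k))
        = cinner (\<Sum>j\<in>UNIV. cinner (w i) (v j) *s w j) (XX *v w k)"
      by (simp add: cinner_sum_left cinner_scale_left)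
    then show ?thesis using recon[OF wW] by simp
  qed
  then show ?thesis by (simp add: Gm_def Hm_def matrix_matrix_mult_def vec_eq_iff)
qed

lemma XX_herm: "cinner (XX *v x) y = cinner x (XX *v y)"
  using cinner_mat[of XX x y] facts by simp

lemma HG: "Hm ** Gm = Gm"
proof -
  have "(\<Sum>j\<in>UNIV. cinner (w i) (XX *v w j) * cinner (w j) (v k)) = cinner (w i) (v k)" for i k
  proof -
    have "(\<Sum>j\<in>UNIV. cinner (w i) (XX *v w j) * cinner (w j) (v k))
        = cinner (\<Sum>j\<in>UNIV. cinner (XX *v w i) (w j) *s w j) (v k)"
      by (simp add: cinner_sum_left cinner_scale_left XX_herm)
    also have "\<dots> = cinner ((SS ** XX) *v w i) (v k)"
      by (simp add: S_vec SS_def matrix_vector_mul_assoc[symmetric])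
    finally show ?thesis using SXw by simp
  qed
  then show ?thesis by (simp add: Gm_def Hm_def matrix_matrix_mult_def vec_eq_iff)
qed

lemma adjH: "adj Hm = Hm"
proof -
  have "cnj (cinner (w j) (XX *v w i)) = cinner (w i) (XX *v w j)" for i j
    using XX_herm[of "w i" "w j"] XX_herm[of "w j" "w i"] cinner_commute[of "w i" "XX *v w j"]
      cinner_commute[of "w j" "XX *v w i"] by simp
  then show ?thesis unfolding adj_def Hm_def vec_eq_iff by simp
qed

lemma traceG: "trace Gm = of_nat (vec.dim W)"
  using trace_dim by (simp add: trace_def Gm_def)

lemma fro_G: "fro (Gm - Hm) = fro Gm - real (vec.dim W)"
  using fro_diff_eq(1)[OF GH HG adjH] traceG by simp

lemma canon_iff: "Gm = Hm \<longleftrightarrow> (\<forall>j. v j = obl_proj V (orth_compl W) (XX *v w j))"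
proof
  assume A: "\<forall>j. v j = obl_proj V (orth_compl W) (XX *v w j)"
  have "cinner (w i) (v j) = cinner (w i) (XX *v w j)" for i j
    using A pi2_cinner[OF wW] by metis
  then show "Gm = Hm" by (simp add: Gm_def Hm_def vec_eq_iff)
next
  assume GH: "Gm = Hm"
  show "\<forall>j. v j = obl_proj V (orth_compl W) (XX *v w j)"
  proof
    fix j
    define z where "z = v j - obl_proj V (orth_compl W) (XX *v w j)"
    have zV: "z \<in> V" using vV pi2_V pi2_eq subV vec.subspace_diff z_def by metis
    have zw: "cinner (w i) z = 0" for i
      using GH[unfolded Gm_def Hm_def vec_eq_iff] pi2_cinner[OF wW]
      by (simp add: z_def cinner_diff_right)
    have "\<forall>y\<in>W. cinner y z = 0"
    proof
      fix y assume "y \<in> W"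
      then have "y \<in> vec.span (range w)" using spanw by simp
      then show "cinner y z = 0"
      proof (induction rule: vec.span_induct)
        case base
        show ?case unfolding vec.subspace_def by (auto simp: cinner_add_left cinner_scale_left)
      next
        case (step x) then show ?case using zw by auto
      qed
    qed
    then have "\<forall>y\<in>W. cinner z y = 0" by (metis cinner_commute complex_cnj_zero)
    then have "z = 0" using VWperp zV by blast
    then show "v j = obl_proj V (orth_compl W) (XX *v w j)" by (simp add: z_def)
  qed
qed

end

lemma card_minus_one: "card (UNIV - {i::'m::finite}) = CARD('m) - 1"
  by (simp add: card_Diff_singleton)

lemma welch_arith:
  fixes a :: "'m::finite \<Rightarrow> 'm \<Rightarrow> real"
  assumes N2: "CARD('m) \<ge> 2" and nn: "\<forall>i j. a i j \<ge> 0"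
    and mu: "mu = Max {a i j | i j. i \<noteq> j}"
    and F: "F = d\<^sup>2 / N + (\<Sum>i\<in>UNIV. \<Sum>j\<in>UNIV - {i}. a i j)" and N: "N = real CARD('m)"
    and Fd: "F \<ge> d" and d: "0 < d"
  defines "\<beta> \<equiv> d * (N - d) / (N\<^sup>2 * (N - 1))"
  shows "mu \<ge> \<beta>" and "mu = \<beta> \<longleftrightarrow> (F = d \<and> (\<forall>i j. i \<noteq> j \<longrightarrow> a i j = \<beta>))"
    and "F = d \<Longrightarrow> \<forall>i j. i \<noteq> j \<longrightarrow> a i j = c \<Longrightarrow> mu = \<beta>"
proof -
  define A where "A = {a i j | i j. i \<noteq> j}"
  have Aim: "A = (\<lambda>(i, j). a i j) ` {p. fst p \<noteq> snd p}" by (auto simp: A_def image_def)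
  then have finA: "finite A" by simp
  obtain i0 j0 :: 'm where ij0: "i0 \<noteq> j0"
  proof -
    fix i0 :: 'm
    have "UNIV \<noteq> {i0}"
    proof
      assume "UNIV = {i0}"
      then have "CARD('m) = 1" by (metis card.empty card_insert_disjoint empty_iff finite.emptyI One_nat_def)
      then show False using N2 by simp
    qed
    then obtain j0 where "j0 \<noteq> i0" by blast
    then show ?thesis using that by blast
  qed
  have neA: "A \<noteq> {}" using ij0 by (auto simp: A_def)
  have le: "a i j \<le> mu" if "i \<noteq> j" for i j
    using that finA unfolding mu A_def[symmetric] by (intro Max_ge) (auto simp: A_def)
  have muA: "mu \<in> A" using finA neA Max_in unfolding mu A_def[symmetric] by blast
  define S0 where "S0 = (\<Sum>i\<in>UNIV. \<Sum>j\<in>UNIV - {i}. a i j)"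
  have Npos: "N - 1 > 0" using N2 N by simp
  have NN: "N * (N - 1) > 0" using Npos N by simp
  have cnt: "(\<Sum>i\<in>(UNIV::'m set). \<Sum>j\<in>UNIV - {i}. x) = N * (N - 1) * x" for x :: real
    using N N2 by (simp add: card_minus_one of_nat_diff)
  have S0le: "S0 \<le> N * (N - 1) * mu"
  proof -
    have "S0 \<le> (\<Sum>i\<in>(UNIV::'m set). \<Sum>j\<in>UNIV - {i}. mu)"
      unfolding S0_def using le by (intro sum_mono) auto
    then show ?thesis using cnt[of mu] by linarith
  qed
  have beta: "N * (N - 1) * \<beta> = d - d\<^sup>2 / N"
    using NN Npos N by (simp add: \<beta>_def field_simps power2_eq_square)
  have FS: "F = d\<^sup>2 / N + S0" using F S0_def by simp
  show g1: "mu \<ge> \<beta>"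
  proof -
    have "N * (N - 1) * \<beta> \<le> N * (N - 1) * mu" using beta FS Fd S0le by linarith
    then show ?thesis using NN mult_le_cancel_left_pos by blast
  qed
  have conv: "mu = \<beta>" if "\<forall>i j. i \<noteq> j \<longrightarrow> a i j = \<beta>"
  proof -
    have "A = {\<beta>}" using that neA by (auto simp: A_def)
    then show ?thesis using muA by simp
  qed
  show "mu = \<beta> \<longleftrightarrow> (F = d \<and> (\<forall>i j. i \<noteq> j \<longrightarrow> a i j = \<beta>))"
  proof
    assume e: "mu = \<beta>"
    have "S0 \<le> N * (N - 1) * \<beta>" using S0le e by simp
    then have Feq: "F = d" using beta FS Fd by linarith
    have "(\<Sum>i\<in>UNIV. \<Sum>j\<in>UNIV - {i}. mu - a i j) = N * (N - 1) * mu - S0"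
      unfolding S0_def using cnt by (simp add: sum_subtractf)
    also have "\<dots> = 0" using beta FS Feq e by simp
    finally have z: "(\<Sum>i\<in>UNIV. \<Sum>j\<in>UNIV - {i}. mu - a i j) = 0" .
    have nn2: "\<forall>i\<in>UNIV. \<forall>j\<in>UNIV - {i}. mu - a i j \<ge> 0" using le by auto
    have "\<forall>i\<in>UNIV. (\<Sum>j\<in>UNIV - {i}. mu - a i j) = 0"
    proof -
      have "\<forall>i\<in>UNIV. (\<Sum>j\<in>UNIV - {i}. mu - a i j) \<ge> 0"
      proof
        fix i :: 'm
        show "(\<Sum>j\<in>UNIV - {i}. mu - a i j) \<ge> 0" using le by (intro sum_nonneg) auto
      qed
      then show ?thesis using z by (simp add: sum_nonneg_eq_0_iff)
    qed
    then have "\<forall>i\<in>UNIV. \<forall>j\<in>UNIV - {i}. mu - a i j = 0"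
    proof (intro ballI)
      fix i j :: 'm assume P: "\<forall>i\<in>UNIV. (\<Sum>j\<in>UNIV - {i}. mu - a i j) = 0" and j: "j \<in> UNIV - {i}"
      have "(\<Sum>j\<in>UNIV-{i}. mu - a i j) = 0" using P by simp
      moreover have "\<forall>j\<in>UNIV-{i}. mu - a i j \<ge> 0" using le by auto
      ultimately show "mu - a i j = 0"
        using j sum_nonneg_eq_0_iff[of "UNIV-{i}" "\<lambda>j. mu - a i j"] by auto
    qed
    then have "\<forall>i j. i \<noteq> j \<longrightarrow> a i j = mu"
    proof (intro allI impI)
      fix i j :: 'm assume P: "\<forall>i\<in>UNIV. \<forall>j\<in>UNIV - {i}. mu - a i j = 0" and "i \<noteq> j"
      then have "j \<in> UNIV - {i}" by simp
      then have "mu - a i j = 0" using P by blast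
      then show "a i j = mu" by simp
    qed
    then show "F = d \<and> (\<forall>i j. i \<noteq> j \<longrightarrow> a i j = \<beta>)" using Feq e by simp
  next
    assume "F = d \<and> (\<forall>i j. i \<noteq> j \<longrightarrow> a i j = \<beta>)"
    then show "mu = \<beta>" using conv by blast
  qed
  assume Fd': "F = d" and ac: "\<forall>i j. i \<noteq> j \<longrightarrow> a i j = c"
  have "S0 = (\<Sum>i\<in>(UNIV::'m set). \<Sum>j\<in>UNIV - {i}. c)"
    unfolding S0_def using ac by (intro sum.cong) auto
  then have "S0 = N * (N - 1) * c" using cnt[of c] by simp
  then have "N * (N - 1) * c = N * (N - 1) * \<beta>" using beta FS Fd' by linarith
  then have "c = \<beta>" using NN by (metis mult_cancel_left less_irrefl)
  then show "mu = \<beta>" using conv ac by simp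
qed

lemma mat_vec_sum_gen: "A *v sum f I = (\<Sum>i\<in>I. A *v (f i :: complex^'n))"
  by (induction I rule: infinite_finite_induct) (auto simp: mat_vec_add)

context setting begin

lemma f_RSX: "RR ** (SS ** XX) = SS ** (XX ** RR)" using facts by blast
lemma f_RSR: "RR ** SS ** RR = SS ** XX" using facts by blast
lemma f_RR: "RR ** RR = XX" using facts by blast

lemma S_in_W: "SS *v y \<in> W"
  unfolding SS_def S_vec using subW wW by (intro vec.subspace_sum) (auto simp: vec.subspace_scale)

lemma R_in_W: "RR *v w i \<in> W"
proof -
  have "RR *v w i = RR *v ((SS ** XX) *v w i)" using SXw by simp
  also have "\<dots> = (RR ** (SS ** XX)) *v w i" by (simp add: matrix_vector_mul_assoc)
  also have "\<dots> = SS *v ((XX ** RR) *v w i)" by (simp only: f_RSX matrix_vector_mul_assoc)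
  finally show ?thesis using S_in_W by simp
qed

lemma RR_herm: "cinner (RR *v x) y = cinner x (RR *v y)"
  using cinner_mat[of RR x y] facts by simp

lemma w_in_span:
  assumes k: "k \<noteq> 0"
  shows "w i \<in> vec.span (range (\<lambda>j. k *s (RR *v w j)))"
proof -
  have "w i = (SS ** XX) *v w i" using SXw by simp
  also have "\<dots> = (RR ** SS ** RR) *v w i" by (simp only: f_RSR)
  also have "\<dots> = RR *v (SS *v (RR *v w i))" by (simp only: matrix_vector_mul_assoc matrix_mul_assoc)
  also have "\<dots> = (\<Sum>j\<in>UNIV. cinner (RR *v w i) (w j) *s (RR *v w j))"
    by (simp add: SS_def S_vec mat_vec_sum_gen mat_vec_scale)
  also have "\<dots> = (\<Sum>j\<in>UNIV. (cinner (RR *v w i) (w j) / k) *s (k *s (RR *v w j)))"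
    using k by simp
  finally have e: "w i = \<dots>" .
  show ?thesis
    by (subst e, intro vec.span_sum vec.span_scale vec.span_base) auto
qed

lemma span_psi:
  assumes k: "k \<noteq> 0"
  shows "vec.span (range (\<lambda>j. k *s (RR *v w j))) = W"
proof
  show "vec.span (range (\<lambda>j. k *s (RR *v w j))) \<subseteq> W"
    using R_in_W subW by (intro vec.span_minimal) (auto simp: vec.subspace_scale)
  have "vec.span (range w) \<subseteq> vec.span (range (\<lambda>j. k *s (RR *v w j)))"
    using w_in_span[OF k] by (intro vec.span_minimal) (auto simp: vec.subspace_span)
  then show "W \<subseteq> vec.span (range (\<lambda>j. k *s (RR *v w j)))" using spanw by simp
qed

lemma tight_R:
  assumes x: "x \<in> W"
  shows "(\<Sum>i\<in>UNIV. (cmod (cinner x (RR *v w i)))\<^sup>2) = (norm x)\<^sup>2"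
proof -
  have "complex_of_real (\<Sum>i\<in>UNIV. (cmod (cinner x (RR *v w i)))\<^sup>2)
       = complex_of_real (\<Sum>i\<in>UNIV. (cmod (cinner (RR *v x) (w i)))\<^sup>2)"
    by (simp add: RR_herm)
  also have "\<dots> = cinner (SS *v (RR *v x)) (RR *v x)" unfolding SS_def by (rule S_cinner[symmetric])
  also have "\<dots> = cinner (RR *v (SS *v (RR *v x))) x" by (simp add: RR_herm)
  also have "\<dots> = cinner ((RR ** SS ** RR) *v x) x" by (simp only: matrix_vector_mul_assoc matrix_mul_assoc)
  also have "\<dots> = cinner x x" using SX_W[OF x] by (simp only: f_RSR)
  also have "\<dots> = complex_of_real ((norm x)\<^sup>2)" by (rule cinner_self)
  finally show ?thesis using of_real_eq_iff by blast
qed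

lemma psi_inner: "cinner (k *s (RR *v w i)) (k *s (RR *v w j)) = complex_of_real ((cmod k)\<^sup>2) * Hm$i$j"
proof -
  have "cinner (RR *v w i) (RR *v w j) = cinner (w i) ((RR ** RR) *v w j)"
    by (simp add: RR_herm matrix_vector_mul_assoc)
  also have "\<dots> = Hm$i$j" by (simp add: f_RR Hm_def)
  finally have "cinner (RR *v w i) (RR *v w j) = Hm$i$j" .
  moreover have "cnj k * k = complex_of_real ((cmod k)\<^sup>2)" using complex_norm_square[of k] by (simp add: mult.commute)
  ultimately show ?thesis
    by (simp add: cinner_scale_left cinner_scale_right mult.assoc[symmetric])
qed

end

lemma comp_eq: "(((r::real) *\<^sub>R (mat 1 + (s::real) *\<^sub>R Q)) :: complex^'m^'m)$i$j
   = complex_of_real r * ((if i = j then 1 else 0) + complex_of_real s * Q$i$j)"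
  by (simp add: mat_def) (simp add: scaleR_conv_of_real)

lemma fro_nonneg: "fro M \<ge> 0"
  unfolding fro_def by (intro sum_nonneg) auto

lemma fro_0: "fro (0::complex^'m^'m) = 0"
  unfolding fro_def by simp

theorem theorem3p5:
  fixes W V :: "(complex^'n) set"
    and w v :: "'m::finite \<Rightarrow> complex^'n"
  assumes subW: "vec.subspace W" and subV: "vec.subspace V"
    and dsum: "direct_sum_whole W (orth_compl V)"
    and frame: "is_frame W w"
    and dual: "oblique_dual_frame W V w v"
    and diag: "\<forall>i j. cinner (w i) (v i) = cinner (w j) (v j)"
    and N2: "CARD('m) \<ge> 2"
    and Wnz: "W \<noteq> {0}"
  defines "N \<equiv> CARD('m)"
    and "dW \<equiv> vec.dim W"
    and "S \<equiv> frame_operator w"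
    and "mu \<equiv> Max {(cmod (cinner (w i) (v j)))\<^sup>2 | i j. i \<noteq> j}"
    and "G \<equiv> (\<chi> i j. cinner (w i) (v j)) :: complex^'m^'m"
  shows "mu \<ge> (real dW * (real N - real dW) / ((real N)\<^sup>2 * (real N - 1)))
    \<and> (mu = (real dW * (real N - real dW) / ((real N)\<^sup>2 * (real N - 1))) \<longleftrightarrow>
         (\<exists>c. \<forall>i j. i \<noteq> j \<longrightarrow> cmod (cinner (w i) (v j)) = c)
         \<and> (\<forall>j. v j = obl_proj V (orth_compl W) (mp_inverse S *v w j)))
    \<and> (mu = (real dW * (real N - real dW) / ((real N)\<^sup>2 * (real N - 1))) \<longleftrightarrow>
         (\<exists>Q. gen_signature Q \<and>
            G = (real dW / real N) *\<^sub>R (mat 1 + sqrt ((real N - real dW) / (real dW * (real N - 1))) *\<^sub>R Q)))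
    \<and> (mu = (real dW * (real N - real dW) / ((real N)\<^sup>2 * (real N - 1))) \<longleftrightarrow>
         is_ETF N dW W (\<lambda>i. complex_of_real (sqrt (real N / real dW)) *s (psd_sqrt (mp_inverse S) *v w i))
         \<and> (\<forall>j. v j = obl_proj V (orth_compl W) (mp_inverse S *v w j)))"

proof -
  interpret setting W V w v using subW subV dsum frame dual by unfold_locales
  have SX: "S = SS" unfolding S_def SS_def ..
  have XXe: "mp_inverse S = XX" unfolding SX XX_def ..
  have RRe: "psd_sqrt (mp_inverse S) = RR" unfolding XXe RR_def ..
  have GG: "G = Gm" unfolding G_def Gm_def ..
  define \<beta> where "\<beta> = real dW * (real N - real dW) / ((real N)\<^sup>2 * (real N - 1))"
  define a where "a i j = (cmod (Gm$i$j))\<^sup>2" for i j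
  have NC: "N = CARD('m)" by (simp add: N_def)
  have dpos: "dW \<ge> 1"
  proof (rule ccontr)
    assume "\<not> dW \<ge> 1"
    then have "dW = 0" by simp
    then have "W \<subseteq> {0}" unfolding dW_def by simp
    then show False using Wnz vec.subspace_0[OF subW] by blast
  qed
  have dle: "dW \<le> N" using dim_le N_def dW_def by simp
  have Npos: "real N \<ge> 2" using N2 NC by simp
  have diagG: "Gm$i$i = complex_of_real (real dW / real N)" for i
  proof -
    have "trace Gm = (\<Sum>k\<in>(UNIV::'m set). Gm$i$i)"
      unfolding trace_def Gm_def using diag by (intro sum.cong) auto
    then have "of_nat dW = of_nat N * Gm$i$i" using traceG dW_def NC by simp
    then show ?thesis using Npos by (simp add: field_simps)
  qed
  have aii: "a i i = (real dW / real N)\<^sup>2" for i unfolding a_def diagG norm_of_real by simp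
  have Fro: "fro Gm = (real dW)\<^sup>2 / real N + (\<Sum>i\<in>UNIV. \<Sum>j\<in>UNIV - {i}. a i j)"
  proof -
    have "fro Gm = (\<Sum>i\<in>UNIV. a i i + (\<Sum>j\<in>UNIV - {i}. a i j))"
      unfolding fro_def a_def
    proof (intro sum.cong refl)
      fix i :: 'm
      show "(\<Sum>j\<in>UNIV. (cmod (Gm $ i $ j))\<^sup>2) = (cmod (Gm $ i $ i))\<^sup>2 + (\<Sum>j\<in>UNIV - {i}. (cmod (Gm $ i $ j))\<^sup>2)"
        by (rule sum.remove) auto
    qed
    also have "\<dots> = real N * (real dW / real N)\<^sup>2 + (\<Sum>i\<in>UNIV. \<Sum>j\<in>UNIV - {i}. a i j)"
      by (simp add: sum.distrib aii NC)
    also have "real N * (real dW / real N)\<^sup>2 = (real dW)\<^sup>2 / real N"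
      using Npos by (simp add: power2_eq_square)
    finally show ?thesis .
  qed
  have FroGe: "fro Gm \<ge> real dW" using fro_G fro_nonneg[of "Gm - Hm"] dW_def by simp
  have FroEq: "fro Gm = real dW \<longleftrightarrow> Gm = Hm"
  proof
    assume "fro Gm = real dW"
    then have "fro (Gm - Hm) = 0" using fro_G dW_def by simp
    then show "Gm = Hm" using fro_zero by fastforce
  next
    assume "Gm = Hm"
    then have "fro (Gm - Hm) = 0" using fro_0 by simp
    then show "fro Gm = real dW" using fro_G dW_def by linarith
  qed
  have mu_eq: "mu = Max {a i j | i j. i \<noteq> j}" unfolding mu_def a_def Gm_def by simp
  have nn: "\<forall>i j. a i j \<ge> 0" by (simp add: a_def)
  have d0: "0 < real dW" using dpos by simp
  have Nr: "real N = real CARD('m)" using NC by simp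
  have W1: "mu \<ge> \<beta>" and W2: "mu = \<beta> \<longleftrightarrow> (fro Gm = real dW \<and> (\<forall>i j. i \<noteq> j \<longrightarrow> a i j = \<beta>))"
    and W3: "\<And>c. fro Gm = real dW \<Longrightarrow> \<forall>i j. i \<noteq> j \<longrightarrow> a i j = c \<Longrightarrow> mu = \<beta>"
    using welch_arith[OF N2 nn mu_eq Fro Nr FroGe d0] unfolding \<beta>_def by blast+
  have canon: "(\<forall>j. v j = obl_proj V (orth_compl W) (mp_inverse S *v w j)) \<longleftrightarrow> Gm = Hm"
    using canon_iff XXe by simp
  have adjG: "Gm = Hm \<Longrightarrow> adj Gm = Gm" using adjH by simp
  have E1: "mu = \<beta> \<longleftrightarrow> (\<exists>c. \<forall>i j. i \<noteq> j \<longrightarrow> cmod (cinner (w i) (v j)) = c)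
         \<and> (\<forall>j. v j = obl_proj V (orth_compl W) (mp_inverse S *v w j))"
  proof
    assume "mu = \<beta>"
    then have h: "Gm = Hm" "\<forall>i j. i \<noteq> j \<longrightarrow> a i j = \<beta>" using W2 FroEq by auto
    have "\<forall>i j. i \<noteq> j \<longrightarrow> cmod (cinner (w i) (v j)) = sqrt \<beta>"
    proof (intro allI impI)
      fix i j :: 'm assume "i \<noteq> j"
      then have "(cmod (cinner (w i) (v j)))\<^sup>2 = \<beta>" using h(2) unfolding a_def Gm_def by simp
      then show "cmod (cinner (w i) (v j)) = sqrt \<beta>" by (metis norm_ge_zero real_sqrt_unique)
    qed
    then show "(\<exists>c. \<forall>i j. i \<noteq> j \<longrightarrow> cmod (cinner (w i) (v j)) = c)
         \<and> (\<forall>j. v j = obl_proj V (orth_compl W) (mp_inverse S *v w j))" using h(1) canon by blast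
  next
    assume h: "(\<exists>c. \<forall>i j. i \<noteq> j \<longrightarrow> cmod (cinner (w i) (v j)) = c)
         \<and> (\<forall>j. v j = obl_proj V (orth_compl W) (mp_inverse S *v w j))"
    then obtain c where c: "\<forall>i j. i \<noteq> j \<longrightarrow> cmod (cinner (w i) (v j)) = c" by blast
    have "\<forall>i j. i \<noteq> j \<longrightarrow> a i j = c\<^sup>2" using c by (simp add: a_def Gm_def)
    moreover have "fro Gm = real dW" using h canon FroEq by blast
    ultimately show "mu = \<beta>" using W3 by blast
  qed

  have dN0: "real dW \<le> real N" using dle by simp
  define \<alpha> where "\<alpha> = sqrt ((real N - real dW) / (real dW * (real N - 1)))"
  have \<alpha>0: "\<alpha> \<ge> 0" unfolding \<alpha>_def using dN0 Npos d0 by simp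
  have \<alpha>2: "\<alpha>\<^sup>2 = (real N - real dW) / (real dW * (real N - 1))"
    unfolding \<alpha>_def using dN0 Npos d0 by simp
  have \<kappa>\<beta>: "(real dW / real N * \<alpha>)\<^sup>2 = \<beta>"
    unfolding power_mult_distrib \<alpha>2 \<beta>_def using Npos d0 by (simp add: field_simps power2_eq_square)
  have HmG: "adj Gm = Gm \<Longrightarrow> Gm = Hm"
  proof -
    assume aG: "adj Gm = Gm"
    have "Gm = adj (Hm ** Gm)" using HG aG by simp
    also have "\<dots> = Gm ** Hm" by (simp add: adj_mult aG adjH)
    finally show "Gm = Hm" using GH by simp
  qed
  have E2: "mu = \<beta> \<longleftrightarrow> (\<exists>Q. gen_signature Q \<and>
            G = (real dW / real N) *\<^sub>R (mat 1 + sqrt ((real N - real dW) / (real dW * (real N - 1))) *\<^sub>R Q))"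
    unfolding \<alpha>_def[symmetric] GG
  proof
    assume "mu = \<beta>"
    then have h: "Gm = Hm" "\<forall>i j. i \<noteq> j \<longrightarrow> a i j = \<beta>" using W2 FroEq by auto
    have aG: "adj Gm = Gm" using adjG h(1) by blast
    show "\<exists>Q. gen_signature Q \<and> Gm = (real dW / real N) *\<^sub>R (mat 1 + \<alpha> *\<^sub>R Q)"
    proof (cases "dW = N")
      case True
      then have b0: "\<beta> = 0" by (simp add: \<beta>_def)
      have a0: "\<alpha> = 0" using True by (simp add: \<alpha>_def)
      define Q :: "complex^'m^'m" where "Q = (\<chi> i j. if i = j then 0 else 1)"
      have "gen_signature Q" by (simp add: gen_signature_def Q_def adj_def vec_eq_iff)
      moreover have "Gm = (real dW / real N) *\<^sub>R (mat 1 + \<alpha> *\<^sub>R Q)"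
      proof -
        have "Gm$i$j = (if i = j then 1 else 0)" for i j
        proof (cases "i = j")
          case True then show ?thesis using diagG \<open>dW = N\<close> Npos by simp
        next
          case False then have "a i j = 0" using h(2) b0 by simp
          then show ?thesis using False by (simp add: a_def)
        qed
        then show ?thesis using True Npos by (simp add: vec_eq_iff comp_eq a0 mat_def)
      qed
      ultimately show ?thesis by blast
    next
      case False
      then have dlt: "real dW < real N" using dle by simp
      define \<kappa> where "\<kappa> = real dW / real N * \<alpha>"
      have \<alpha>p: "\<alpha> > 0" unfolding \<alpha>_def using dlt Npos d0 by simp
      have \<kappa>p: "\<kappa> > 0" unfolding \<kappa>_def using \<alpha>p d0 Npos by simp
      have cG: "cmod (Gm$i$j) = \<kappa>" if "i \<noteq> j" for i j
      proof -
        have "(cmod (Gm$i$j))\<^sup>2 = \<kappa>\<^sup>2" using h(2) that \<kappa>\<beta> by (simp add: a_def \<kappa>_def)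
        then show ?thesis using \<kappa>p by (metis norm_ge_zero less_imp_le power2_eq_iff_nonneg)
      qed
      define Q :: "complex^'m^'m" where "Q = (\<chi> i j. if i = j then 0 else Gm$i$j / complex_of_real \<kappa>)"
      have cnjG: "cnj (Gm$j$i) = Gm$i$j" for i j using aG by (simp add: adj_def vec_eq_iff)
      have "gen_signature Q"
        unfolding gen_signature_def
      proof (intro conjI allI impI)
        show "adj Q = Q" by (simp add: Q_def adj_def vec_eq_iff cnjG)
        show "Q$i$i = 0" for i by (simp add: Q_def)
        show "cmod (Q$i$j) = 1" if "i \<noteq> j" for i j
          using that cG[OF that] \<kappa>p by (simp add: Q_def norm_divide)
      qed
      moreover have "Gm = (real dW / real N) *\<^sub>R (mat 1 + \<alpha> *\<^sub>R Q)"
      proof -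
        have k: "complex_of_real (real dW / real N) * complex_of_real \<alpha> = complex_of_real \<kappa>"
          by (simp add: \<kappa>_def)
        have Gij2: "Gm$i$j = complex_of_real (real dW / real N) * ((if i = j then 1 else 0) + complex_of_real \<alpha> * Q$i$j)" for i j
        proof (cases "i = j")
          case True then show ?thesis using diagG by (simp add: Q_def)
        next
          case False
          have "complex_of_real (real dW / real N) * (complex_of_real \<alpha> * (Gm$i$j / complex_of_real \<kappa>))
              = (complex_of_real (real dW / real N) * complex_of_real \<alpha>) * Gm$i$j / complex_of_real \<kappa>"
            by simp
          also have "\<dots> = Gm$i$j" using k \<kappa>p by simp
          finally show ?thesis using False by (simp add: Q_def)
        qed
        show ?thesis unfolding vec_eq_iff comp_eq by (intro allI, rule Gij2)
      qed
      ultimately show ?thesis by blast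
    qed
  next
    assume "\<exists>Q. gen_signature Q \<and> Gm = (real dW / real N) *\<^sub>R (mat 1 + \<alpha> *\<^sub>R Q)"
    then obtain Q where Q: "gen_signature Q" and GQ: "Gm = (real dW / real N) *\<^sub>R (mat 1 + \<alpha> *\<^sub>R Q)" by blast
    have Gij: "Gm$i$j = complex_of_real (real dW / real N) * ((if i = j then 1 else 0) + complex_of_real \<alpha> * Q$i$j)" for i j
      unfolding GQ by (rule comp_eq)
    have aQ: "adj Q = Q" using Q gen_signature_def by blast
    have cQ: "cnj (Q$j$i) = Q$i$j" for i j
    proof -
      have "(adj Q)$i$j = Q$i$j" using aQ by simp
      then show ?thesis by (simp add: adj_def)
    qed
    have "adj Gm = Gm" unfolding adj_def vec_eq_iff by (simp add: Gij cQ)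
    then have GH': "Gm = Hm" using HmG by blast
    have "\<forall>i j. i \<noteq> j \<longrightarrow> cmod (cinner (w i) (v j)) = real dW / real N * \<alpha>"
    proof (intro allI impI)
      fix i j :: 'm assume ij: "i \<noteq> j"
      have "cmod (Q$i$j) = 1" using Q ij gen_signature_def by blast
      then have "cmod (Gm$i$j) = real dW / real N * \<alpha>"
        using ij \<alpha>0 d0 Npos by (simp add: Gij norm_mult norm_divide)
      then show "cmod (cinner (w i) (v j)) = real dW / real N * \<alpha>" by (simp add: Gm_def)
    qed
    then show "mu = \<beta>" using E1 GH' canon by blast
  qed

  define k where "k = complex_of_real (sqrt (real N / real dW))"
  have k2: "(cmod k)\<^sup>2 = real N / real dW" unfolding k_def using Npos d0 by simp
  have k0: "k \<noteq> 0" unfolding k_def using Npos d0 by simp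
  have pin: "cinner (k *s (RR *v w i)) (k *s (RR *v w j)) = complex_of_real (real N / real dW) * Hm$i$j" for i j
    by (simp only: psi_inner k2)
  have E3: "mu = \<beta> \<longleftrightarrow> is_ETF N dW W (\<lambda>i. complex_of_real (sqrt (real N / real dW)) *s (psd_sqrt (mp_inverse S) *v w i))
         \<and> (\<forall>j. v j = obl_proj V (orth_compl W) (mp_inverse S *v w j))"
    unfolding k_def[symmetric] RRe
  proof
    assume "mu = \<beta>"
    then have h: "Gm = Hm" "\<forall>i j. i \<noteq> j \<longrightarrow> a i j = \<beta>" using W2 FroEq by auto
    have "is_ETF N dW W (\<lambda>i. k *s (RR *v w i))"
      unfolding is_ETF_def tight_frame_def is_frame_def
    proof (intro conjI)
      show "N = CARD('m)" by (rule NC)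
      show "vec.dim W = dW" by (simp add: dW_def)
      show "\<forall>i. norm (k *s (RR *v w i)) = 1"
      proof
        fix i
        have "complex_of_real ((norm (k *s (RR *v w i)))\<^sup>2) = complex_of_real (real N / real dW) * Gm$i$i"
          using pin[of i i] h(1) cinner_self by metis
        also have "\<dots> = 1" using diagG d0 Npos by simp
        finally have "(norm (k *s (RR *v w i)))\<^sup>2 = 1" by (metis of_real_eq_1_iff)
        then show "norm (k *s (RR *v w i)) = 1" using norm_ge_zero[of "k *s (RR *v w i)"]
          by (simp add: power2_eq_1_iff)
      qed
      show "\<forall>i. k *s (RR *v w i) \<in> W" using R_in_W subW vec.subspace_scale by blast
      show "vec.span (range (\<lambda>i. k *s (RR *v w i))) = W" by (rule span_psi[OF k0])
      show "\<exists>A>0. \<forall>x\<in>W. (\<Sum>i\<in>UNIV. (cmod (cinner x (k *s (RR *v w i))))\<^sup>2) = A * (norm x)\<^sup>2"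
      proof (intro exI[of _ "real N / real dW"] conjI ballI)
        show "real N / real dW > 0" using Npos d0 by simp
        fix x assume x: "x \<in> W"
        have "(\<Sum>i\<in>UNIV. (cmod (cinner x (k *s (RR *v w i))))\<^sup>2)
            = (\<Sum>i\<in>UNIV. (cmod k)\<^sup>2 * (cmod (cinner x (RR *v w i)))\<^sup>2)"
          by (simp add: cinner_scale_right norm_mult norm_divide power_mult_distrib power_divide)
        also have "\<dots> = (cmod k)\<^sup>2 * (norm x)\<^sup>2" using tight_R[OF x] by (simp add: sum_distrib_left[symmetric])
        finally show "(\<Sum>i\<in>UNIV. (cmod (cinner x (k *s (RR *v w i))))\<^sup>2) = real N / real dW * (norm x)\<^sup>2"
          using k2 by simp
      qed
      show "\<exists>c. \<forall>i j. i \<noteq> j \<longrightarrow> (cmod (cinner (k *s (RR *v w i)) (k *s (RR *v w j))))\<^sup>2 = c"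
      proof (intro exI[of _ "(real N / real dW)\<^sup>2 * \<beta>"] allI impI)
        fix i j :: 'm assume ij: "i \<noteq> j"
        have "(cmod (cinner (k *s (RR *v w i)) (k *s (RR *v w j))))\<^sup>2 = (real N / real dW)\<^sup>2 * a i j"
          using Npos d0 by (simp add: pin a_def h(1) norm_mult norm_divide power_mult_distrib power_divide)
        then show "(cmod (cinner (k *s (RR *v w i)) (k *s (RR *v w j))))\<^sup>2 = (real N / real dW)\<^sup>2 * \<beta>"
          using h(2) ij by simp
      qed
    qed
    then show "is_ETF N dW W (\<lambda>i. k *s (RR *v w i)) \<and> (\<forall>j. v j = obl_proj V (orth_compl W) (mp_inverse S *v w j))"
      using h(1) canon by blast
  next
    assume A: "is_ETF N dW W (\<lambda>i. k *s (RR *v w i)) \<and> (\<forall>j. v j = obl_proj V (orth_compl W) (mp_inverse S *v w j))"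
    then have GH': "Gm = Hm" using canon by blast
    obtain c0 where c0: "\<forall>i j. i \<noteq> j \<longrightarrow> (cmod (cinner (k *s (RR *v w i)) (k *s (RR *v w j))))\<^sup>2 = c0"
      using A unfolding is_ETF_def by blast
    have "\<forall>i j. i \<noteq> j \<longrightarrow> a i j = c0 * (real dW / real N)\<^sup>2"
    proof (intro allI impI)
      fix i j :: 'm assume ij: "i \<noteq> j"
      have "(cmod (cinner (k *s (RR *v w i)) (k *s (RR *v w j))))\<^sup>2 = (real N / real dW)\<^sup>2 * a i j"
        using Npos d0 by (simp add: pin a_def GH' norm_mult norm_divide power_mult_distrib power_divide)
      then have "(real N / real dW)\<^sup>2 * a i j = c0" using c0 ij by simp
      then show "a i j = c0 * (real dW / real N)\<^sup>2" using Npos d0 by (auto simp: field_simps)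
    qed
    moreover have "fro Gm = real dW" using GH' FroEq by blast
    ultimately show "mu = \<beta>" using W3 by blast
  qed
  show ?thesis
    unfolding \<beta>_def[symmetric] using W1 E1 E2 E3 by blast
qed

end
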